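(* Let $k=2^{\ell}$ with $\ell\ge2$ an integer and $q=4k$. Let $f\in\mathbb F_q[X,Y]$ be a local permutation polynomial whose permutation polynomial tuple consists of the $q$ elements of the group $G_1=\{b^ja^i:0\le j\le 2k-1,\ 0\le i\le 1\}$ (in some order), where $a$ and $b$ are as defined below. Then $f$ has a companion.
   Context: The elements of $\mathbb F_q$ are enumerated as $\mathbb F_q=\{c_0,\dots,c_{q-1}\}$; $\mathfrak S_q$ is the symmetric group of permutations of $\mathbb F_q$, composed right to left, $(\sigma\tau)(x)=\sigma(\tau(x))$, written in cycle notation. $a=(c_0,c_1)(c_2,c_3)\cdots(c_{4k-2},c_{4k-1})$ and $b=C_1C_2$, where $C_1$ is the $2k$-cycle whose entries in order are: for $m=0,1,\dots,\frac{k-2}{2}$ the pair $c_{2m},c_{2(2m+k-1)}$; then for $n=0,1,\dots,\frac{k-4}{2}$ the pair $c_{2n+k},c_{2(2n+k)}$; then $c_{4k-1},c_{4k-4}$; and $C_2$ is the $2k$-cycle whose entries in order are: for $m=0,1,\dots,\frac{k-2}{2}$ the pair $c_{2m+1},c_{2(2m+k)+1}$; then for $n=0,1,\dots,\frac{k-4}{2}$ the pair $c_{2n+k+1},c_{2(2n+k)-1}$; then $c_{4k-2},c_{4k-5}$. ($G_1$ is a subgroup of $\mathfrak S_q$ of order $q$ whose non-identity elements have no fixed points.) Every function $\mathbb F_q^2\to\mathbb F_q$ is identified with the unique polynomial in $\mathbb F_q[X,Y]$ of degree $<q$ in each variable representing it. $f$ is a local permutation polynomial (LPP) if $x\mapsto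 f(x,y_0)$ and $y\mapsto f(x_0,y)$ are permutations of $\mathbb F_q$ for all $x_0,y_0$. A permutation polynomial tuple is $(\beta_0,\dots,\beta_{q-1})\in\mathfrak S_q^q$ such that $\beta_i^{-1}\beta_j$ has no fixed point whenever $i\ne j$; LPPs $f$ correspond bijectively to such tuples via $f(x,\beta_i(x))=c_i$ for all $x$ and all $i$. Two LPPs $f,g$ are orthogonal (companions) if for every $(u,v)\in\mathbb F_q^2$ the system $f(X,Y)=u$, $g(X,Y)=v$ has exactly one solution in $\mathbb F_q^2$; a companion of $f$ is an LPP orthogonal to $f$. *)

theory Defs
  imports Main "HOL-Combinatorics.Cycles"
begin

(* Local permutation polynomial: every function F_q^2 -> F_q is identified with its
   reduced polynomial, so we work with the function directly. *)
definition is_LPP :: "('a \<Rightarrow> 'a \<Rightarrow> 'a) \<Rightarrow> bool" where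
  "is_LPP f \<longleftrightarrow> (\<forall>y0. bij (\<lambda>x. f x y0)) \<and> (\<forall>x0. bij (\<lambda>y. f x0 y))"

definition is_ppt :: "nat \<Rightarrow> (nat \<Rightarrow> 'a \<Rightarrow> 'a) \<Rightarrow> bool" where
  "is_ppt q \<beta> \<longleftrightarrow> (\<forall>i<q. bij (\<beta> i)) \<and>
     (\<forall>i<q. \<forall>j<q. i \<noteq> j \<longrightarrow> (\<forall>x. inv (\<beta> i) (\<beta> j x) \<noteq> x))"

definition tuple_of :: "nat \<Rightarrow> (nat \<Rightarrow> 'a) \<Rightarrow> ('a \<Rightarrow> 'a \<Rightarrow> 'a) \<Rightarrow> (nat \<Rightarrow> 'a \<Rightarrow> 'a) \<Rightarrow> bool" where
  "tuple_of q c f \<beta> \<longleftrightarrow> is_ppt q \<beta> \<and> (\<forall>i<q. \<forall>x. f x (\<beta> i x) = c i)"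

definition orthogonal :: "('a \<Rightarrow> 'a \<Rightarrow> 'a) \<Rightarrow> ('a \<Rightarrow> 'a \<Rightarrow> 'a) \<Rightarrow> bool" where
  "orthogonal f g \<longleftrightarrow> (\<forall>u v. \<exists>!(x, y). f x y = u \<and> g x y = v)"

definition has_companion :: "('a \<Rightarrow> 'a \<Rightarrow> 'a) \<Rightarrow> bool" where
  "has_companion f \<longleftrightarrow> (\<exists>g. is_LPP g \<and> orthogonal f g)"

definition perm_a :: "nat \<Rightarrow> (nat \<Rightarrow> 'a) \<Rightarrow> 'a \<Rightarrow> 'a" where
  "perm_a k c = foldr (\<lambda>i p. transpose (c (2*i)) (c (2*i+1)) \<circ> p) [0..<2*k] id"

definition cycle1_idx :: "nat \<Rightarrow> nat list" where
  "cycle1_idx k =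
     concat (map (\<lambda>m. [2*m, 2*(2*m+k-1)]) [0..<k div 2])
   @ concat (map (\<lambda>n. [2*n+k, 2*(2*n+k)]) [0..<(k-2) div 2])
   @ [4*k-1, 4*k-4]"

definition cycle2_idx :: "nat \<Rightarrow> nat list" where
  "cycle2_idx k =
     concat (map (\<lambda>m. [2*m+1, 2*(2*m+k)+1]) [0..<k div 2])
   @ concat (map (\<lambda>n. [2*n+k+1, 2*(2*n+k)-1]) [0..<(k-2) div 2])
   @ [4*k-2, 4*k-5]"

definition perm_b :: "nat \<Rightarrow> (nat \<Rightarrow> 'a) \<Rightarrow> 'a \<Rightarrow> 'a" where
  "perm_b k c = cycle_of_list (map c (cycle1_idx k)) \<circ> cycle_of_list (map c (cycle2_idx k))"

definition G1 :: "nat \<Rightarrow> (nat \<Rightarrow> 'a) \<Rightarrow> ('a \<Rightarrow> 'a) set" where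
  "G1 k c = {(perm_b k c ^^ j) \<circ> (perm_a k c ^^ i) | j i. j \<le> 2*k - 1 \<and> i \<le> 1}"

end

theory Submission
  imports Defs
begin


definition F1 :: "nat \<Rightarrow> nat \<Rightarrow> nat" where
 "F1 k p = (if p < k then (if even p then p else 2*p+2*k-4) else if p < 2*k-2 then (if even p then p else 2*p-2) else if p = 2*k-2 then 4*k-1 else 4*k-4)"
definition F2 :: "nat \<Rightarrow> nat \<Rightarrow> nat" where
 "F2 k p = (if p < k then (if even p then p+1 else 2*p+2*k-1) else if p < 2*k-2 then (if even p then p+1 else 2*p-3) else if p = 2*k-2 then 4*k-2 else 4*k-5)"

lemma concat_pairs:
  "concat (map (\<lambda>m. [u m, v m]) [0..<n]) = map (\<lambda>p. if even p then u (p div 2) else v (p div 2)) [0..<2*n]"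
proof (induction n)
  case (Suc n)
  have "[0..<2*Suc n] = [0..<2*n] @ [2*n, 2*n+1]" by simp
  then show ?case using Suc by simp
qed simp

lemma cyc1_nth:
  assumes "4 dvd k" "0 < k" "p < 2*k"
  shows "cycle1_idx k ! p = F1 k p" "length (cycle1_idx k) = 2*k"
proof -
  obtain h where h: "k = 4*h" using assms(1) by auto
  have hp: "0 < h" using h assms by simp
  have e1: "2 * (k div 2) = k" "2 * ((k-2) div 2) = k - 2" using h hp by auto
  show "length (cycle1_idx k) = 2*k" unfolding cycle1_idx_def concat_pairs e1 using h hp by simp
  have nth: "cycle1_idx k ! p = (if p < k then (if even p then 2*(p div 2) else 2*(2*(p div 2)+k-1))
     else if p - k < k - 2 then (if even (p-k) then 2*((p-k) div 2)+k else 2*(2*((p-k) div 2)+k))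
     else [4*k-1, 4*k-4] ! (p - k - (k-2)))"
    unfolding cycle1_idx_def concat_pairs e1 by (simp add: nth_append)
  show "cycle1_idx k ! p = F1 k p"
  proof (cases "p < k")
    case True
    show ?thesis
    proof (cases "even p")
      case ev: True
      then obtain a where a: "p = 2*a" by auto
      show ?thesis unfolding nth F1_def using True ev a by simp
    next
      case od: False
      then obtain a where a: "p = 2*a+1" using oddE by blast
      have "p div 2 = a" using a by simp
      then show ?thesis unfolding nth F1_def using True od a h hp by simp
    qed
  next
    case False
    define r where "r = p - k"
    have pr: "p = k + r" using False r_def by simp
    have rk: "r < k" using pr assms(3) by simp
    have par: "even p = even r" using pr h by simp
    show ?thesis
    proof (cases "r < k - 2")
      case rs: True
      show ?thesis
      proof (cases "even r")
        case ev: True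
        then obtain b where b: "r = 2*b" by auto
        show ?thesis unfolding nth F1_def r_def[symmetric] using False rs ev b pr par h hp by simp
      next
        case od: False
        then obtain b where b: "r = 2*b+1" using oddE by blast
        have "r div 2 = b" using b by simp
        then show ?thesis unfolding nth F1_def r_def[symmetric] using False rs od b pr par h hp by simp
      qed
    next
      case rs: False
      have "r = k - 2 \<or> r = k - 1" using rs rk by arith
      moreover have "even (k-2)" "odd (k-1)" using h hp by simp_all
      ultimately show ?thesis unfolding nth F1_def r_def[symmetric] using False rs pr par h hp by auto
    qed
  qed
qed

lemma cyc2_nth:
  assumes "4 dvd k" "0 < k" "p < 2*k"
  shows "cycle2_idx k ! p = F2 k p" "length (cycle2_idx k) = 2*k"
proof -
  obtain h where h: "k = 4*h" using assms(1) by auto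
  have hp: "0 < h" using h assms by simp
  have e1: "2 * (k div 2) = k" "2 * ((k-2) div 2) = k - 2" using h hp by auto
  show "length (cycle2_idx k) = 2*k" unfolding cycle2_idx_def concat_pairs e1 using h hp by simp
  have nth: "cycle2_idx k ! p = (if p < k then (if even p then 2*(p div 2)+1 else 2*(2*(p div 2)+k)+1)
     else if p - k < k - 2 then (if even (p-k) then 2*((p-k) div 2)+k+1 else 2*(2*((p-k) div 2)+k)-1)
     else [4*k-2, 4*k-5] ! (p - k - (k-2)))"
    unfolding cycle2_idx_def concat_pairs e1 by (simp add: nth_append)
  show "cycle2_idx k ! p = F2 k p"
  proof (cases "p < k")
    case True
    show ?thesis
    proof (cases "even p")
      case ev: True
      then obtain a where a: "p = 2*a" by auto
      show ?thesis unfolding nth F2_def using True ev a by simp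
    next
      case od: False
      then obtain a where a: "p = 2*a+1" using oddE by blast
      have "p div 2 = a" using a by simp
      then show ?thesis unfolding nth F2_def using True od a h hp by simp
    qed
  next
    case False
    define r where "r = p - k"
    have pr: "p = k + r" using False r_def by simp
    have rk: "r < k" using pr assms(3) by simp
    have par: "even p = even r" using pr h by simp
    show ?thesis
    proof (cases "r < k - 2")
      case rs: True
      show ?thesis
      proof (cases "even r")
        case ev: True
        then obtain b where b: "r = 2*b" by auto
        show ?thesis unfolding nth F2_def r_def[symmetric] using False rs ev b pr par h hp by simp
      next
        case od: False
        then obtain b where b: "r = 2*b+1" using oddE by blast
        have "r div 2 = b" using b by simp
        then show ?thesis unfolding nth F2_def r_def[symmetric] using False rs od b pr par h hp by (simp; arith)
      qed
    next
      case rs: False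
      have "r = k - 2 \<or> r = k - 1" using rs rk by arith
      moreover have "even (k-2)" "odd (k-1)" using h hp by simp_all
      ultimately show ?thesis unfolding nth F2_def r_def[symmetric] using False rs pr par h hp by auto
    qed
  qed
qed

lemma pk_lemma: fixes p k :: nat assumes "even k" "odd p" "p < k" "2 \<le> k"
  shows "p + k < 2*k-2 \<or> p + k = 2*k-1"
proof -
  have "p \<noteq> k - 2"
  proof
    assume "p = k - 2"
    moreover have "even (k - 2)" using assms(1,4) by simp
    ultimately show False using assms(2) by simp
  qed
  then show ?thesis using assms(3,4) by arith
qed
definition Fe :: "nat \<Rightarrow> bool \<Rightarrow> nat \<Rightarrow> nat" where
  "Fe k e p = (if e then F2 k p else F1 k p)"

lemma Fe_less: assumes "4 dvd k" "0 < k" "p < 2*k" shows "Fe k e p < 4*k"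
  using assms unfolding Fe_def F1_def F2_def by auto

definition par :: "nat \<Rightarrow> nat" where "par n = (if even n then n+1 else n-1)"

lemma kmod: fixes k p :: nat assumes "even k" "0<k" "p < 2*k"
  shows "((k+1)*p) mod (2*k) = (if even p then p else if p < k then p+k else p-k)"
proof -
  obtain h where h: "k = 2*h" using assms(1) by auto
  show ?thesis
  proof (cases "even p")
    case True
    then obtain r where r: "p = 2*r" by auto
    have eq: "(k+1)*p = p + (2*k)*r " using h r by (simp add: algebra_simps)
    have "((k+1)*p) mod (2*k) = p mod (2*k)" unfolding eq by (rule mod_mult_self2)
    then show ?thesis using True assms by simp
  next
    case False
    then obtain r where r: "p = 2*r+1" using oddE by blast
    have eq0: "(k+1)*p = (p+k) + (2*k)*r " using h r by (simp add: algebra_simps)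
    have eq: "((k+1)*p) mod (2*k) = (p+k) mod (2*k)" unfolding eq0 by (rule mod_mult_self2)
    show ?thesis
    proof (cases "p < k")
      case True then show ?thesis using False assms eq by simp
    next
      case F: False
      have "(p+k) mod (2*k) = (p+k-2*k) mod (2*k)" using F by (intro le_mod_geq) simp
      also have "\<dots> = p - k" using F assms by simp
      finally have "(p+k) mod (2*k) = p - k" .
      then show ?thesis using False F eq by simp
    qed
  qed
qed

lemma F1_ev: "even p \<Longrightarrow> p < 2*k-2 \<Longrightarrow> F1 k p = p" by (auto simp: F1_def)
lemma F1_o1: "odd p \<Longrightarrow> p < k \<Longrightarrow> F1 k p = 2*p+2*k-4" by (auto simp: F1_def)
lemma F1_o2: "odd p \<Longrightarrow> k \<le> p \<Longrightarrow> p < 2*k-2 \<Longrightarrow> F1 k p = 2*p-2" by (auto simp: F1_def)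
lemma F1_l1: "2 \<le> k \<Longrightarrow> F1 k (2*k-2) = 4*k-1" by (auto simp: F1_def)
lemma F1_l2: "2 \<le> k \<Longrightarrow> F1 k (2*k-1) = 4*k-4" by (auto simp: F1_def)
lemma F2_ev: "even p \<Longrightarrow> p < 2*k-2 \<Longrightarrow> F2 k p = p+1" by (auto simp: F2_def)
lemma F2_o1: "odd p \<Longrightarrow> p < k \<Longrightarrow> F2 k p = 2*p+2*k-1" by (auto simp: F2_def)
lemma F2_o2: "odd p \<Longrightarrow> k \<le> p \<Longrightarrow> p < 2*k-2 \<Longrightarrow> F2 k p = 2*p-3" by (auto simp: F2_def)
lemma F2_l1: "2 \<le> k \<Longrightarrow> F2 k (2*k-2) = 4*k-2" by (auto simp: F2_def)
lemma F2_l2: "2 \<le> k \<Longrightarrow> F2 k (2*k-1) = 4*k-5" by (auto simp: F2_def)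

lemma pcases:
  assumes "p < 2*k" "2 \<le> (k::nat)" "even k"
  obtains a where "p = 2*a" "p < 2*k-2" | "p = 2*k-2" | a where "p = 2*a+1" "p < k"
   | a where "p = 2*a+1" "k < p" "p < 2*k-2" | "p = 2*k-1"
proof (cases "even p")
  case True
  then obtain a where "p = 2*a" by auto
  then show ?thesis using that assms by (cases "p < 2*k-2") auto
next
  case False
  then obtain a where a: "p = 2*a+1" using oddE by blast
  have "2*a+1 \<noteq> 2*k-2" "2*a+1 \<noteq> k" using assms by presburger+
  then show ?thesis using that assms a
    by (cases "p < k"; cases "p < 2*k-2") auto
qed

lemma modh: "x = m*q + r \<Longrightarrow> r < m \<Longrightarrow> x mod m = (r::nat)" by simp

lemma res_lemmas:
  fixes a b h k :: nat
  assumes "k = 4*h" "0 < h"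
  shows "(4*k-1) mod 2 = 1" "(4*k-4) mod 2 = 0" "(4*a+2*k-2) mod 4 = 2" "(4*a+2*k-2) mod 2 = 0"
    "(4*k-2) mod 2 = 0" "(4*k-5) mod 2 = 1" "(4*a+2*k+1) mod 4 = 1" "(4*a+2*k+1) mod 2 = 1"
    "0 < b \<Longrightarrow> (4*b-1) mod 4 = 3" "0 < b \<Longrightarrow> (4*b-1) mod 2 = 1"
    "(4*a) mod 4 = 0" "(4*a) mod 2 = 0" "(2*a) mod 2 = 0" "(2*a+1) mod 2 = 1"
  apply (rule modh[of _ _ "2*k-1"]; use assms in arith)
  apply (rule modh[of _ _ "2*k-2"]; use assms in arith)
  apply (rule modh[of _ _ "a+2*h-1"]; use assms in arith)
  apply (rule modh[of _ _ "2*a+k-1"]; use assms in arith)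
  apply (rule modh[of _ _ "2*k-1"]; use assms in arith)
  apply (rule modh[of _ _ "2*k-3"]; use assms in arith)
  apply (rule modh[of _ _ "a+2*h"]; use assms in arith)
  apply (rule modh[of _ _ "2*a+k"]; use assms in arith)
  apply (rule modh[of _ _ "b-1"]; arith)
  apply (rule modh[of _ _ "2*b-1"]; arith)
  by simp_all

lemma res_lemmas2:
  fixes h k :: nat
  assumes "k = 4*h" "0 < h"
  shows "(4*k-4) mod 4 = 0" "(4*k-5) mod 4 = 3"
  apply (rule modh[of _ _ "k-1"]; use assms in arith)
  apply (rule modh[of _ _ "k-2"]; use assms in arith)
  done

lemma F1_cases':
  assumes "4 dvd k" "0 < k" "p < 2*k" "F1 k p = v"
  shows "(\<exists>a. p = 2*a \<and> 2*a < 2*k-2 \<and> v = 2*a \<and> v mod 2 = 0) \<or> (p = 2*k-2 \<and> v = 4*k-1 \<and> v mod 2 = 1)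
   \<or> (\<exists>a. p = 2*a+1 \<and> 2*a+1 < k \<and> v = 4*a+2*k-2 \<and> v mod 4 = 2 \<and> v mod 2 = 0)
   \<or> (\<exists>a. p = 2*a+1 \<and> k < 2*a+1 \<and> 2*a+1 < 2*k-2 \<and> v = 4*a \<and> v mod 4 = 0 \<and> v mod 2 = 0)
   \<or> (p = 2*k-1 \<and> v = 4*k-4 \<and> v mod 4 = 0 \<and> v mod 2 = 0)"
proof -
  obtain h where h: "k = 4*h" using assms(1) by auto
  have hp: "0 < h" using h assms by simp
  have k2: "2 \<le> k" using h hp by simp
  have ke: "even k" using h by simp
  note R = res_lemmas[OF h hp] res_lemmas2[OF h hp]
  from assms(3) k2 ke show ?thesis
  proof (cases rule: pcases)
    case (1 a)
    have "v = 2*a" using 1 F1_ev[of p k] assms(4) by simp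
    moreover have "v mod 2 = 0" using calculation by simp
    ultimately show ?thesis using 1 by - (rule disjI1, rule exI[of _ a], simp)
  next
    case 2
    have "v = 4*k-1" using 2 F1_l1[OF k2] assms(4) by simp
    moreover have "v mod 2 = 1" using calculation R by simp
    ultimately show ?thesis using 2 by - (rule disjI2, rule disjI1, simp)
  next
    case (3 a)
    have "v = 4*a+2*k-2" using 3 F1_o1[of p k] assms(4) by simp
    moreover have "v mod 4 = 2" "v mod 2 = 0" using calculation R by simp_all
    ultimately show ?thesis using 3 by - (rule disjI2, rule disjI2, rule disjI1, rule exI[of _ a], simp)
  next
    case (4 a)
    have "v = 4*a" using 4 F1_o2[of p k] assms(4) by simp
    moreover have "v mod 4 = 0" "v mod 2 = 0" using calculation R by simp_all
    ultimately show ?thesis using 4 by - (rule disjI2, rule disjI2, rule disjI2, rule disjI1, rule exI[of _ a], simp)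
  next
    case 5
    have "v = 4*k-4" using 5 F1_l2[OF k2] assms(4) by simp
    moreover have "v mod 4 = 0" "v mod 2 = 0" using calculation R by simp_all
    ultimately show ?thesis using 5 by - (rule disjI2, rule disjI2, rule disjI2, rule disjI2, simp)
  qed
qed

lemma F2_cases':
  assumes "4 dvd k" "0 < k" "p < 2*k" "F2 k p = v"
  shows "(\<exists>a. p = 2*a \<and> 2*a < 2*k-2 \<and> v = 2*a+1 \<and> v mod 2 = 1) \<or> (p = 2*k-2 \<and> v = 4*k-2 \<and> v mod 2 = 0)
   \<or> (\<exists>a. p = 2*a+1 \<and> 2*a+1 < k \<and> v = 4*a+2*k+1 \<and> v mod 4 = 1 \<and> v mod 2 = 1)
   \<or> (\<exists>a. p = 2*a+1 \<and> k < 2*a+1 \<and> 2*a+1 < 2*k-2 \<and> v = 4*a-1 \<and> v mod 4 = 3 \<and> v mod 2 = 1)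
   \<or> (p = 2*k-1 \<and> v = 4*k-5 \<and> v mod 4 = 3 \<and> v mod 2 = 1)"
proof -
  obtain h where h: "k = 4*h" using assms(1) by auto
  have hp: "0 < h" using h assms by simp
  have k2: "2 \<le> k" using h hp by simp
  have ke: "even k" using h by simp
  note R = res_lemmas[OF h hp] res_lemmas2[OF h hp]
  from assms(3) k2 ke show ?thesis
  proof (cases rule: pcases)
    case (1 a)
    have "v = 2*a+1" using 1 F2_ev[of p k] assms(4) by simp
    moreover have "v mod 2 = 1" using calculation by simp
    ultimately show ?thesis using 1 by - (rule disjI1, rule exI[of _ a], simp)
  next
    case 2
    have "v = 4*k-2" using 2 F2_l1[OF k2] assms(4) by simp
    moreover have "v mod 2 = 0" using calculation R by simp
    ultimately show ?thesis using 2 by - (rule disjI2, rule disjI1, simp)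
  next
    case (3 a)
    have "v = 4*a+2*k+1" using 3 F2_o1[of p k] assms(4) by simp
    moreover have "v mod 4 = 1" "v mod 2 = 1" using calculation R by simp_all
    ultimately show ?thesis using 3 by - (rule disjI2, rule disjI2, rule disjI1, rule exI[of _ a], simp)
  next
    case (4 a)
    have "v = 4*a-1" using 4 F2_o2[of p k] assms(4) by simp
    moreover have "0 < a" using 4 h hp by linarith
    moreover have "v mod 4 = 3" "v mod 2 = 1" using calculation R(9,10)[of a] by simp_all
    ultimately show ?thesis using 4 by - (rule disjI2, rule disjI2, rule disjI2, rule disjI1, rule exI[of _ a], simp)
  next
    case 5
    have "v = 4*k-5" using 5 F2_l2[OF k2] assms(4) by simp
    moreover have "v mod 4 = 3" "v mod 2 = 1" using calculation R by simp_all
    ultimately show ?thesis using 5 by - (rule disjI2, rule disjI2, rule disjI2, rule disjI2, simp)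
  qed
qed


lemma par_ev: "n = 2*m \<Longrightarrow> par n = n+1" by (simp add: par_def)
lemma par_od: "n = 2*m+1 \<Longrightarrow> par n = n-1" by (simp add: par_def)
lemma par_ev2: assumes "n = 2*m" "n + 1 = r" shows "par n = r" using par_ev[OF assms(1)] assms(2) by simp
lemma par_od2: assumes "n = 2*m+1" "n - 1 = r" shows "par n = r" using par_od[OF assms(1)] assms(2) by simp

lemma Fe_par':
  assumes "4 dvd k" "0 < k" "p < 2*k"
  shows "par (Fe k e p) = Fe k (\<not> e) (if even p then p else if p < k then p+k else p-k)"
proof -
  obtain h where h: "k = 4*h" using assms(1) by auto
  have hp: "0 < h" using h assms by simp
  have k2: "2 \<le> k" using h hp by simp
  have ke: "even k" using h by simp
  define pi where "pi = (if even p then p else if p < k then p+k else p-k)"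
  from assms(3) k2 ke have "par (Fe k e p) = Fe k (\<not> e) pi"
  proof (cases rule: pcases)
    case (1 a)
    then have "pi = p" unfolding pi_def by simp
    then show ?thesis unfolding Fe_def using 1 F1_ev[of p k] F2_ev[of p k] par_ev[of "p" a] par_od[of "p+1" a]
      by simp
  next
    case 2
    have "par (4*k-1) = 4*k-2" by (rule par_od2[of "4*k-1" "2*k-1"]) (use k2 in arith)+
    moreover have "par (4*k-2) = 4*k-1" by (rule par_ev2[of "4*k-2" "2*k-1"]) (use k2 in arith)+
    moreover have "pi = p" unfolding pi_def using 2 by simp
    ultimately show ?thesis unfolding Fe_def using 2 F1_l1[OF k2] F2_l1[OF k2] ke k2 by auto
  next
    case (3 a)
    have pk: "p + k < 2*k-2 \<or> p + k = 2*k-1" using pk_lemma[OF ke _ _ k2, of p] 3 by auto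
    have op: "odd (p+k)" "odd p" using 3 ke by simp_all
    have "par (2*p+2*k-4) = 2*p+2*k-3" by (rule par_ev2[of "2*p+2*k-4" "p+k-2"]) (use k2 in arith)+
    moreover have "par (2*p+2*k-1) = 2*p+2*k-2" by (rule par_od2[of "2*p+2*k-1" "p+k-1"]) (use k2 in arith)+
    moreover have "F2 k (p+k) = 2*p+2*k-3" using pk F2_o2[of "p+k" k] F2_l2[OF k2] op 3 by auto
    moreover have "F1 k (p+k) = 2*p+2*k-2" using pk F1_o2[of "p+k" k] F1_l2[OF k2] op 3 by auto
    moreover have "pi = p+k" unfolding pi_def using 3 op by simp
    ultimately show ?thesis unfolding Fe_def using 3 F1_o1[of p k] F2_o1[of p k] by auto
  next
    case (4 a)
    have op: "odd (p-k)" "odd p" "p - k < k" using 4 ke by auto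
    have "par (2*p-2) = 2*p-1" by (rule par_ev2[of "2*p-2" "p-1"]) (use 4 in arith)+
    moreover have "par (2*p-3) = 2*p-4" by (rule par_od2[of "2*p-3" "p-2"]) (use 4 k2 in arith)+
    moreover have "F2 k (p-k) = 2*p-1" using F2_o1[of "p-k" k] op 4 by auto
    moreover have "F1 k (p-k) = 2*p-4" using F1_o1[of "p-k" k] op 4 by auto
    moreover have "pi = p-k" unfolding pi_def using 4 op by simp
    ultimately show ?thesis unfolding Fe_def using 4 F1_o2[of p k] F2_o2[of p k] by auto
  next
    case 5
    have op: "odd (k-1)" "odd p" "k - 1 < k" using 5 ke k2 by auto
    have "par (4*k-4) = 4*k-3" by (rule par_ev2[of "4*k-4" "2*k-2"]) (use k2 in arith)+
    moreover have "par (4*k-5) = 4*k-6" by (rule par_od2[of "4*k-5" "2*k-3"]) (use k2 in arith)+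
    moreover have "F2 k (k-1) = 4*k-3" using F2_o1[of "k-1" k] op k2 by auto
    moreover have "F1 k (k-1) = 4*k-6" using F1_o1[of "k-1" k] op k2 by auto
    moreover have "pi = k-1" unfolding pi_def using 5 op by simp
    ultimately show ?thesis unfolding Fe_def using 5 F1_l2[OF k2] F2_l2[OF k2] k2 by auto
  qed
  then show ?thesis unfolding pi_def .
qed

lemma Fe_inj:
  assumes "4 dvd k" "0 < k" "p < 2*k" "p' < 2*k" "Fe k e p = Fe k e' p'"
  shows "e = e' \<and> p = p'"
proof -
  obtain h where h: "k = 4*h" using assms(1) by auto
  have hp: "0 < h" using h assms by simp
  define v where "v = Fe k e p"
  have v1: "Fe k e p = v" "Fe k e' p' = v" using assms(5) v_def by auto
  show ?thesis
  proof (cases e; cases e')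
    assume "e" "e'"
    then have "F2 k p = v" "F2 k p' = v" using v1 unfolding Fe_def by auto
    from F2_cases'[OF assms(1,2,3) this(1)] F2_cases'[OF assms(1,2,4) this(2)] h hp
    have "p = p'" by (elim disjE exE conjE) (linarith+)
    then show ?thesis using \<open>e\<close> \<open>e'\<close> by simp
  next
    assume "e" "\<not>e'"
    then have "F2 k p = v" "F1 k p' = v" using v1 unfolding Fe_def by auto
    from F2_cases'[OF assms(1,2,3) this(1)] F1_cases'[OF assms(1,2,4) this(2)] h hp
    have False by (elim disjE exE conjE) (linarith+)
    then show ?thesis by simp
  next
    assume "\<not>e" "e'"
    then have "F1 k p = v" "F2 k p' = v" using v1 unfolding Fe_def by auto
    from F1_cases'[OF assms(1,2,3) this(1)] F2_cases'[OF assms(1,2,4) this(2)] h hp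
    have False by (elim disjE exE conjE) (linarith+)
    then show ?thesis by simp
  next
    assume "\<not>e" "\<not>e'"
    then have "F1 k p = v" "F1 k p' = v" using v1 unfolding Fe_def by auto
    from F1_cases'[OF assms(1,2,3) this(1)] F1_cases'[OF assms(1,2,4) this(2)] h hp
    have "p = p'" by (elim disjE exE conjE) (linarith+)
    then show ?thesis using \<open>\<not>e\<close> \<open>\<not>e'\<close> by simp
  qed
qed

lemma Fe_par:
  assumes "4 dvd k" "0 < k" "p < 2*k"
  shows "par (Fe k e p) = Fe k (\<not> e) (((k+1)*p) mod (2*k))"
proof -
  have "even k" using assms(1) by auto
  then show ?thesis using Fe_par'[OF assms] kmod[OF _ assms(2,3)] by simp
qed


lemma modeq_int: "(a::nat) mod K = b mod K \<longleftrightarrow> int K dvd int a - int b"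
  by (metis of_nat_eq_iff zmod_int mod_eq_dvd_iff)

lemma small_dvd_zero: fixes d K :: int assumes "K dvd d" "\<bar>d\<bar> < K" shows "d = 0"
proof -
  obtain t where t: "d = K * t" using assms(1) by auto
  have "K > 0" using assms(2) by linarith
  have "t = 0"
  proof (rule ccontr)
    assume "t \<noteq> 0"
    then have "\<bar>t\<bar> \<ge> 1" by linarith
    then have "K * 1 \<le> K * \<bar>t\<bar>" using \<open>K > 0\<close> by (intro mult_left_mono) auto
    then have "\<bar>d\<bar> \<ge> K" using t \<open>K > 0\<close> by (simp add: abs_mult)
    then show False using assms(2) by linarith
  qed
  then show ?thesis using t by simp
qed

lemma mod_eq_small: "(a::nat) < K \<Longrightarrow> b < K \<Longrightarrow> a mod K = b mod K \<Longrightarrow> a = b" by simp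

lemma mod_eq_k: fixes a b k :: nat
  assumes "a < 2*k" "b < 2*k" "int k dvd int a - int b"
  shows "a = b \<or> a = b + k \<or> b = a + k"
proof -
  obtain t where t: "int a - int b = int k * t" using assms(3) by auto
  have "t = 0 \<or> t = 1 \<or> t = -1"
  proof (rule ccontr)
    assume "\<not> ?thesis"
    then have "t \<ge> 2 \<or> t \<le> -2" by linarith
    moreover have "t \<ge> 2 \<Longrightarrow> int k * t \<ge> int k * 2" by (rule mult_left_mono) auto
    moreover have "t \<le> -2 \<Longrightarrow> int k * t \<le> int k * (-2)" by (rule mult_left_mono) auto
    ultimately have "int k * t \<ge> 2 * int k \<or> int k * t \<le> -2 * int k" by auto
    then show False using t assms(1,2) by linarith
  qed
  then show ?thesis using t by auto
qed

lemma coprime_half: fixes k :: int assumes "4 dvd k" shows "coprime (k div 2 + 1) k"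
proof -
  obtain h where h: "k = 4*h" using assms by auto
  have "k div 2 + 1 = 2*h+1" using h by simp
  moreover have "coprime (2*h+1) (4*h)"
  proof -
    have "coprime (2*h+1) (2*h)" by (rule coprime_add_one_left)
    moreover have "coprime (2*h+1) 2" by (simp add: coprime_right_2_iff_odd)
    moreover have "4*h = 2 * (2*h)" by simp
    ultimately show ?thesis by (simp only: coprime_mult_right_iff)
  qed
  ultimately show ?thesis using h by simp
qed

lemma key_cancel:
  fixes k p1 p2 c :: nat
  assumes "4 dvd k" "p1 < 2*k" "p2 < 2*k" "c = 2 \<or> c = k+2 \<or> c = 2*k+2"
    "(c*p1) mod (2*k) = (c*p2) mod (2*k)"
  shows "p1 = p2 \<or> p1 = p2 + k \<or> p2 = p1 + k"
proof -
  define d where "d = int p1 - int p2"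
  define c' where "c' = int c div 2"
  have ce: "int c = 2 * c'" using assms(1,4) unfolding c'_def by auto
  have cop: "coprime c' (int k)"
  proof -
    have "4 dvd int k" using assms(1) by presburger
    then have A: "coprime (int k div 2 + 1) (int k)" by (rule coprime_half)
    have B: "coprime (int k + 1) (int k)" by (rule coprime_add_one_left)
    have e1: "(2 + int k) div 2 = int k div 2 + 1" by simp
    from assms(4) show ?thesis
    proof (elim disjE)
      assume "c = 2" then show ?thesis unfolding c'_def by simp
    next
      assume "c = k+2" then have "c' = int k div 2 + 1" unfolding c'_def by simp
      then show ?thesis using A by simp
    next
      assume "c = 2*k+2" then have "c' = int k + 1" unfolding c'_def by simp
      then show ?thesis using B by simp
    qed
  qed
  have "int (2*k) dvd int (c*p1) - int (c*p2)" using assms(5) modeq_int by blast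
  then have "2 * int k dvd 2 * (c' * d)" unfolding d_def using ce by (simp add: algebra_simps)
  then have "int k dvd c' * d" by simp
  then have "int k dvd d" using cop by (simp add: coprime_commute coprime_dvd_mult_right_iff)
  then show ?thesis using mod_eq_k[OF assms(2,3)] unfolding d_def by blast
qed

definition mm :: "nat \<Rightarrow> bool \<Rightarrow> nat" where "mm k e = (if e then k+1 else 1)"
definition eps :: "bool \<Rightarrow> nat" where "eps e = (if e then 1 else 0)"
definition AA :: "nat \<Rightarrow> bool \<Rightarrow> nat \<Rightarrow> bool" where
  "AA k e p = (if e then (p+1) mod (2*k) < k else k \<le> p)"
definition GG :: "nat \<Rightarrow> bool \<times> nat \<Rightarrow> bool \<times> nat \<Rightarrow> bool \<times> nat" where
  "GG k X Y = (fst Y \<noteq> AA k (fst X) (snd X), (snd Y + mm k (fst Y) * (snd X + eps (fst X))) mod (2*k))"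
definition SS :: "nat \<Rightarrow> bool \<Rightarrow> nat \<Rightarrow> bool \<times> nat \<Rightarrow> bool \<times> nat" where
  "SS k i j X = (fst X \<noteq> i, (mm k i * snd X + j) mod (2*k))"

lemma A_sep:
  assumes "0 < k" "p + k < 2*k"
  shows "AA k e p \<noteq> AA k e (p+k)"
proof (cases e)
  case False then show ?thesis using assms unfolding AA_def by auto
next
  case True
  show ?thesis
  proof (cases "p + 1 < k")
    case T: True
    have "(p+1) mod (2*k) = p+1" using T by simp
    moreover have "(p+k+1) mod (2*k) = p+k+1" using T by simp
    ultimately show ?thesis using True T unfolding AA_def by simp
  next
    case F: False
    then have pk: "p + 1 = k" using assms by simp
    have pk2: "p+k+1 = 2*k" using pk by simp
    have "(p+1) mod (2*k) = k" using pk assms by simp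
    moreover have "(p+k+1) mod (2*k) = 0" unfolding pk2 by simp
    ultimately show ?thesis using True assms unfolding AA_def by simp
  qed
qed

lemma mm_cases: "mm k e = 1 \<or> mm k e = k + 1" unfolding mm_def by auto

lemma mm_odd: "even k \<Longrightarrow> odd (mm k e)" unfolding mm_def by auto

lemma mm_cop: assumes "even k" shows "coprime (int (mm k e)) (int (2*k))"
proof -
  have "coprime (int k + 1) (int k)" by (rule coprime_add_one_left)
  moreover have "coprime (int k + 1) 2" using assms by (simp add: coprime_right_2_iff_odd)
  ultimately have "coprime (int k + 1) (2 * int k)" by (simp add: coprime_mult_right_iff)
  then show ?thesis unfolding mm_def by auto
qed

lemma mod_succ: fixes a b K :: nat assumes "a < K" "b < K" "int K dvd int a - int b - 1"
  shows "a = (b+1) mod K"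
proof -
  have "int K dvd int a - int (b+1)" using assms(3) by (simp add: algebra_simps)
  then have "a mod K = (b+1) mod K" using modeq_int by blast
  then show ?thesis using assms(1) by simp
qed

lemma latin_x:
  assumes "4 dvd k" "0 < k" "p1 < 2*k" "p2 < 2*k" "GG k (e1,p1) Y = GG k (e2,p2) Y"
  shows "e1 = e2 \<and> p1 = p2"
proof -
  obtain e' p' where Y: "Y = (e',p')" by force
  have ke: "even k" using assms(1) by auto
  let ?m = "mm k e'"
  have A: "AA k e1 p1 = AA k e2 p2" using assms(5) unfolding GG_def Y by auto
  have "(p' + ?m * (p1 + eps e1)) mod (2*k) = (p' + ?m * (p2 + eps e2)) mod (2*k)"
    using assms(5) unfolding GG_def Y by simp
  then have "int (2*k) dvd int (p' + ?m * (p1 + eps e1)) - int (p' + ?m * (p2 + eps e2))"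
    using modeq_int by blast
  then have "int (2*k) dvd int ?m * ((int p1 + int (eps e1)) - (int p2 + int (eps e2)))"
    by (simp add: algebra_simps)
  then have D: "int (2*k) dvd (int p1 + int (eps e1)) - (int p2 + int (eps e2))"
    using mm_cop[OF ke, of e'] by (simp add: coprime_commute coprime_dvd_mult_right_iff)
  show ?thesis
  proof (cases e1; cases e2)
    assume "e1" "e2"
    then have "int (2*k) dvd int p1 - int p2" using D by (simp add: eps_def)
    then have "p1 mod (2*k) = p2 mod (2*k)" using modeq_int by blast
    then show ?thesis using assms \<open>e1\<close> \<open>e2\<close> by simp
  next
    assume "\<not>e1" "\<not>e2"
    then have "int (2*k) dvd int p1 - int p2" using D by (simp add: eps_def)
    then have "p1 mod (2*k) = p2 mod (2*k)" using modeq_int by blast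
    then show ?thesis using assms \<open>\<not>e1\<close> \<open>\<not>e2\<close> by simp
  next
    assume "e1" "\<not>e2"
    then have "int (2*k) dvd int p2 - int p1 - 1" using D
      by (metis (no_types, lifting) add.right_neutral diff_diff_eq dvd_minus_iff eps_def minus_diff_eq of_nat_0 of_nat_1)
    then have "p2 = (p1+1) mod (2*k)" using mod_succ assms(3,4) by blast
    then show ?thesis using A \<open>e1\<close> \<open>\<not>e2\<close> unfolding AA_def by simp arith
  next
    assume "\<not>e1" "e2"
    then have "int (2*k) dvd int p1 - int p2 - 1" using D by (simp add: eps_def algebra_simps)
    then have "p1 = (p2+1) mod (2*k)" using mod_succ assms(3,4) by blast
    then show ?thesis using A \<open>e2\<close> \<open>\<not>e1\<close> unfolding AA_def by simp arith
  qed
qed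

lemma latin_y:
  assumes "p1 < 2*k" "p2 < 2*k" "GG k X (e1,p1) = GG k X (e2,p2)"
  shows "e1 = e2 \<and> p1 = p2"
proof -
  have e: "e1 = e2" using assms(3) unfolding GG_def by auto
  then have "(p1 + mm k e1 * (snd X + eps (fst X))) mod (2*k) = (p2 + mm k e1 * (snd X + eps (fst X))) mod (2*k)"
    using assms(3) unfolding GG_def by simp
  then have "int (2*k) dvd int p1 - int p2" using modeq_int[of "p1 + _" "2*k" "p2 + _"] by simp
  then have "p1 mod (2*k) = p2 mod (2*k)" using modeq_int by blast
  then show ?thesis using assms e by simp
qed

lemma orth_coord:
  assumes "4 dvd k" "0 < k" "p1 < 2*k" "p2 < 2*k"
    "GG k (e1,p1) (SS k i j (e1,p1)) = GG k (e2,p2) (SS k i j (e2,p2))"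
  shows "e1 = e2 \<and> p1 = p2"
proof -
  have ke: "even k" using assms(1) by auto
  define T1 where "T1 = mm k i * p1 + j + mm k (e1 \<noteq> i) * (p1 + eps e1)"
  define T2 where "T2 = mm k i * p2 + j + mm k (e2 \<noteq> i) * (p2 + eps e2)"
  have A: "((e1 \<noteq> i) \<noteq> AA k e1 p1) = ((e2 \<noteq> i) \<noteq> AA k e2 p2)"
    using assms(5) unfolding GG_def SS_def by simp
  have "((mm k i * p1 + j) mod (2*k) + mm k (e1 \<noteq> i) * (p1 + eps e1)) mod (2*k)
     = ((mm k i * p2 + j) mod (2*k) + mm k (e2 \<noteq> i) * (p2 + eps e2)) mod (2*k)"
    using assms(5) unfolding GG_def SS_def by simp
  then have T: "T1 mod (2*k) = T2 mod (2*k)" unfolding T1_def T2_def by (simp add: mod_add_left_eq)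
  show ?thesis
  proof (cases "e1 = e2")
    case True
    define c where "c = mm k i + mm k (e1 \<noteq> i)"
    have c: "c = 2 \<or> c = k+2 \<or> c = 2*k+2" unfolding c_def mm_def by auto
    have T1e: "T1 = c*p1 + (j + mm k (e1 \<noteq> i) * eps e1)" unfolding T1_def c_def by (simp add: algebra_simps)
    have T2e: "T2 = c*p2 + (j + mm k (e1 \<noteq> i) * eps e1)" unfolding T2_def c_def using True by (simp add: algebra_simps)
    have "int (2*k) dvd int T1 - int T2" using T modeq_int by blast
    then have "int (2*k) dvd int (c*p1) - int (c*p2)" unfolding T1e T2e by simp
    then have "(c*p1) mod (2*k) = (c*p2) mod (2*k)" using modeq_int by blast
    then have "p1 = p2 \<or> p1 = p2 + k \<or> p2 = p1 + k" using key_cancel[OF assms(1,3,4) c] by blast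
    moreover have "AA k e1 p1 = AA k e1 p2" using A True by auto
    ultimately show ?thesis using A_sep[OF assms(2), of p2 e1] A_sep[OF assms(2), of p1 e1] assms(3,4) True by auto
  next
    case False
    have "T1 mod (2*k) mod 2 = T2 mod (2*k) mod 2" using T by simp
    then have "T1 mod 2 = T2 mod 2" using ke by (simp add: mod_mod_cancel)
    then have "even T1 = even T2" by (simp add: even_iff_mod_2_eq_zero)
    then show ?thesis using False mm_odd[OF ke] unfolding T1_def T2_def eps_def
      by (cases e1; cases e2; simp) blast+
  qed
qed


definition rho :: "nat \<Rightarrow> (nat \<Rightarrow> 'a) \<Rightarrow> bool \<Rightarrow> nat \<Rightarrow> 'a" where
  "rho k c e p = c (Fe k e p)"

lemma foldr_comp: "foldr (\<lambda>i p. t i \<circ> p) xs q = foldr (\<lambda>i p. t i \<circ> p) xs id \<circ> q"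
  by (induction xs) (auto simp: o_assoc)

lemma perm_a_foldr:
  assumes "inj_on c {..<4*k}" "N \<le> 2*k" "n < 4*k"
  shows "foldr (\<lambda>i p. transpose (c(2*i)) (c(2*i+1)) \<circ> p) [0..<N] id (c n) = (if n < 2*N then c (par n) else c n)"
  using assms(2,3)
proof (induction N arbitrary: n)
  case 0 then show ?case by simp
next
  case (Suc N)
  let ?t = "\<lambda>i. transpose (c(2*i)) (c(2*i+1))"
  let ?F = "\<lambda>N. foldr (\<lambda>i p. ?t i \<circ> p) [0..<N] id"
  have "?F (Suc N) = foldr (\<lambda>i p. ?t i \<circ> p) [0..<N] (?t N \<circ> id)" by simp
  also have "\<dots> = ?F N \<circ> (?t N \<circ> id)" by (rule foldr_comp)
  finally have eq: "?F (Suc N) = ?F N \<circ> ?t N" by simp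
  have in4: "2*N < 4*k" "2*N+1 < 4*k" using Suc.prems by auto
  show ?case
  proof (cases "n = 2*N \<or> n = 2*N+1")
    case True
    then have tn: "?t N (c n) = c (par n)" unfolding par_def by auto
    have "par n < 4*k" "\<not> par n < 2*N" using True in4 unfolding par_def by auto
    moreover have "?F N (c (par n)) = (if par n < 2*N then c (par (par n)) else c (par n))"
      by (rule Suc.IH) (use Suc.prems \<open>par n < 4*k\<close> in auto)
    ultimately have fp: "?F N (c (par n)) = c (par n)" by simp
    have "?F (Suc N) (c n) = ?F N (?t N (c n))" by (simp only: eq comp_apply)
    also have "\<dots> = c (par n)" by (simp only: tn fp)
    finally have r: "?F (Suc N) (c n) = c (par n)" .
    have ifeq: "(if n < 2 * Suc N then c (par n) else c n) = c (par n)" using True by auto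
    show ?thesis unfolding ifeq by (rule r)
  next
    case False
    have "c n \<noteq> c (2*N)" "c n \<noteq> c (2*N+1)"
      using False assms(1) in4 Suc.prems(2) unfolding inj_on_def by auto
    then have tn: "?t N (c n) = c n" by (simp add: transpose_apply_other)
    have "?F N (c n) = (if n < 2*N then c (par n) else c n)"
      by (rule Suc.IH) (use Suc.prems in auto)
    then have fp: "?F N (c n) = (if n < 2 * Suc N then c (par n) else c n)" using False by auto
    have "?F (Suc N) (c n) = ?F N (?t N (c n))" by (simp only: eq comp_apply)
    also have "\<dots> = (if n < 2 * Suc N then c (par n) else c n)" by (simp only: tn fp)
    finally show ?thesis .
  qed
qed

lemma perm_a_act:
  assumes "4 dvd k" "0 < k" "inj_on c {..<4*k}" "p < 2*k"
  shows "perm_a k c (rho k c e p) = rho k c (\<not> e) (((k+1)*p) mod (2*k))"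
proof -
  have "Fe k e p < 4*k" by (rule Fe_less[OF assms(1,2,4)])
  then have "perm_a k c (rho k c e p) = c (par (Fe k e p))"
    unfolding perm_a_def rho_def using perm_a_foldr[OF assms(3), of "2*k"] by simp
  then show ?thesis unfolding rho_def using Fe_par[OF assms(1,2,4)] by simp
qed

lemma cycle_nth:
  assumes "distinct cs" "i < length cs"
  shows "cycle_of_list cs (cs ! i) = cs ! (Suc i mod length cs)"
proof -
  have "map (cycle_of_list cs ^^ 1) cs = rotate 1 cs" by (rule cyclic_rotation) (use assms in simp)
  then have "map (cycle_of_list cs) cs ! i = rotate1 cs ! i" by simp
  then show ?thesis using assms by (simp add: nth_rotate1)
qed

lemma perm_b_act:
  assumes "4 dvd k" "0 < k" "inj_on c {..<4*k}" "p < 2*k"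
  shows "perm_b k c (rho k c e p) = rho k c e ((p+1) mod (2*k))"
proof -
  define L1 where "L1 = map c (cycle1_idx k)"
  define L2 where "L2 = map c (cycle2_idx k)"
  have len: "length L1 = 2*k" "length L2 = 2*k"
    unfolding L1_def L2_def using cyc1_nth(2)[OF assms(1,2), of 0] cyc2_nth(2)[OF assms(1,2), of 0] assms(2) by auto
  have nth1: "L1 ! q = rho k c False q" if "q < 2*k" for q
    unfolding L1_def rho_def Fe_def using cyc1_nth[OF assms(1,2) that] that len by (simp add: L1_def)
  have nth2: "L2 ! q = rho k c True q" if "q < 2*k" for q
    unfolding L2_def rho_def Fe_def using cyc2_nth[OF assms(1,2) that] that len by (simp add: L2_def)
  have rinj: "e1 = e2 \<and> q1 = q2" if "q1 < 2*k" "q2 < 2*k" "rho k c e1 q1 = rho k c e2 q2" for e1 e2 q1 q2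
  proof -
    have "Fe k e1 q1 < 4*k" "Fe k e2 q2 < 4*k" using Fe_less[OF assms(1,2)] that by auto
    then have "Fe k e1 q1 = Fe k e2 q2" using that(3) assms(3) unfolding rho_def inj_on_def by auto
    then show ?thesis using Fe_inj[OF assms(1,2) that(1,2)] by blast
  qed
  have d1: "distinct L1" unfolding distinct_conv_nth len using nth1 rinj by metis
  have d2: "distinct L2" unfolding distinct_conv_nth len using nth2 rinj by metis
  have s1: "x \<in> set L1 \<longleftrightarrow> (\<exists>q<2*k. x = rho k c False q)" for x
    unfolding in_set_conv_nth len using nth1 by auto
  have s2: "x \<in> set L2 \<longleftrightarrow> (\<exists>q<2*k. x = rho k c True q)" for x
    unfolding in_set_conv_nth len using nth2 by auto
  have pb: "perm_b k c = cycle_of_list L1 \<circ> cycle_of_list L2" unfolding perm_b_def L1_def L2_def ..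
  have p1: "(p+1) mod (2*k) < 2*k" using assms by simp
  show ?thesis
  proof (cases e)
    case False
    have "rho k c e p \<notin> set L2" using s2 rinj assms(4) False by blast
    then have "cycle_of_list L2 (rho k c e p) = rho k c e p" by (rule id_outside_supp)
    moreover have "cycle_of_list L1 (rho k c e p) = rho k c e ((p+1) mod (2*k))"
      using cycle_nth[OF d1, of p] nth1[OF assms(4)] nth1[OF p1] len False assms(4) by simp
    ultimately show ?thesis unfolding pb by simp
  next
    case True
    have "cycle_of_list L2 (rho k c e p) = rho k c e ((p+1) mod (2*k))"
      using cycle_nth[OF d2, of p] nth2[OF assms(4)] nth2[OF p1] len True assms(4) by simp
    moreover have "rho k c e ((p+1) mod (2*k)) \<notin> set L1" using s1 rinj p1 True by blast
    then have "cycle_of_list L1 (rho k c e ((p+1) mod (2*k))) = rho k c e ((p+1) mod (2*k))"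
      by (rule id_outside_supp)
    ultimately show ?thesis unfolding pb by simp
  qed
qed


lemma perm_b_pow:
  assumes "4 dvd k" "0 < k" "inj_on c {..<4*k}" "p < 2*k"
  shows "(perm_b k c ^^ j) (rho k c e p) = rho k c e ((p+j) mod (2*k))"
proof (induction j)
  case 0 then show ?case using assms by simp
next
  case (Suc j)
  have "(p+j) mod (2*k) < 2*k" using assms by simp
  then have "perm_b k c (rho k c e ((p+j) mod (2*k))) = rho k c e (((p+j) mod (2*k) + 1) mod (2*k))"
    by (rule perm_b_act[OF assms(1,2,3)])
  also have "((p+j) mod (2*k) + 1) mod (2*k) = (p + j + 1) mod (2*k)" by (rule mod_add_left_eq)
  then have "rho k c e (((p+j) mod (2*k) + 1) mod (2*k)) = rho k c e ((p + Suc j) mod (2*k))" by simp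
  finally show ?case using Suc by simp
qed

lemma G1_act:
  assumes "4 dvd k" "0 < k" "inj_on c {..<4*k}" "s \<in> G1 k c"
  obtains i j where "\<forall>e p. p < 2*k \<longrightarrow> s (rho k c e p) = (case SS k i j (e,p) of (e',p') \<Rightarrow> rho k c e' p')"
proof -
  obtain j i where s: "s = (perm_b k c ^^ j) \<circ> (perm_a k c ^^ i)" "i \<le> 1"
    using assms(4) unfolding G1_def by blast
  show ?thesis
  proof (cases "i = 0")
    case True
    have "s (rho k c e p) = rho k c (e \<noteq> False) ((mm k False * p + j) mod (2*k))" if "p < 2*k" for e p
      using perm_b_pow[OF assms(1,2,3) that] s True by (simp add: mm_def)
    then show ?thesis using that[of False j] unfolding SS_def by auto
  next
    case False
    then have i1: "i = 1" using s by simp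
    have "s (rho k c e p) = rho k c (e \<noteq> True) ((mm k True * p + j) mod (2*k))" if "p < 2*k" for e p
    proof -
      have "s (rho k c e p) = (perm_b k c ^^ j) (rho k c (\<not> e) (((k+1)*p) mod (2*k)))"
        using perm_a_act[OF assms(1,2,3) that] s i1 by simp
      also have "\<dots> = rho k c (\<not> e) ((((k+1)*p) mod (2*k) + j) mod (2*k))"
        by (rule perm_b_pow[OF assms(1,2,3)]) (use assms in simp)
      also have "\<dots> = rho k c (\<not> e) (((k+1)*p + j) mod (2*k))" by (simp add: mod_add_left_eq)
      finally show ?thesis by (simp add: mm_def)
    qed
    then show ?thesis using that[of True j] unfolding SS_def by auto
  qed
qed

theorem theorem4p8:
  fixes f :: "'a::{field,finite} \<Rightarrow> 'a \<Rightarrow> 'a"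
    and c :: "nat \<Rightarrow> 'a"
    and k l q :: nat
  assumes "l \<ge> 2" and "k = 2 ^ l" and "q = 4 * k"
    and "card (UNIV :: 'a set) = q"
    and "bij_betw c {..<q} (UNIV :: 'a set)"
    and "is_LPP f"
    and "\<exists>\<beta>. tuple_of q c f \<beta> \<and> bij_betw \<beta> {..<q} (G1 k c)"
  shows "has_companion f"
proof -
  have k4: "4 dvd k"
  proof -
    have l2: "2 + (l-2) = l" using assms(1) by simp
    have "(2::nat)^l = 2^(2 + (l-2))" by (simp only: l2)
    also have "\<dots> = 4 * 2^(l-2)" by (simp add: power_add)
    finally have "k = 4 * 2^(l-2)" using assms(2) by simp
    then show ?thesis by simp
  qed
  have kp: "0 < k" using assms(2) by simp
  have cinj: "inj_on c {..<4*k}" using assms(3,5) bij_betw_def by blast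
  obtain \<beta> where tb: "tuple_of q c f \<beta>" and bb: "bij_betw \<beta> {..<q} (G1 k c)" using assms(7) by blast
  define D where "D = (UNIV :: bool set) \<times> {..<2*k}"
  define R where "R = (\<lambda>X. rho k c (fst X) (snd X))"
  have Rinj: "inj_on R D"
  proof (rule inj_onI)
    fix X Y assume XY: "X \<in> D" "Y \<in> D" "R X = R Y"
    have "Fe k (fst X) (snd X) < 4*k" "Fe k (fst Y) (snd Y) < 4*k" using Fe_less[OF k4 kp] XY unfolding D_def by auto
    then have "Fe k (fst X) (snd X) = Fe k (fst Y) (snd Y)" using XY(3) cinj unfolding R_def rho_def inj_on_def by auto
    moreover have "snd X < 2*k" "snd Y < 2*k" using XY(1,2) unfolding D_def by auto
    ultimately have "fst X = fst Y \<and> snd X = snd Y" using Fe_inj[OF k4 kp] by blast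
    then show "X = Y" by (simp add: prod_eq_iff)
  qed
  have RD: "R ` D = UNIV"
  proof (rule card_subset_eq)
    show "finite (UNIV :: 'a set)" by simp
    show "R ` D \<subseteq> UNIV" by simp
    have "card D = 4*k" unfolding D_def by (simp add: card_cartesian_product)
    then show "card (R ` D) = card (UNIV :: 'a set)" using card_image[OF Rinj] assms(3,4) by simp
  qed
  define Ri where "Ri = inv_into D R"
  have Ri1: "Ri x \<in> D" for x unfolding Ri_def using RD inv_into_into[of x R D] by simp
  have Ri2: "R (Ri x) = x" for x unfolding Ri_def using RD f_inv_into_f[of x R D] by simp
  have Ri3: "X \<in> D \<Longrightarrow> Ri (R X) = X" for X unfolding Ri_def using Rinj by (simp add: inv_into_f_f)
  have GGD: "GG k X Y \<in> D" for X Y unfolding D_def GG_def using kp by simp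
  have SSD: "SS k i j X \<in> D" for i j X unfolding D_def SS_def using kp by simp
  define g where "g = (\<lambda>x y. R (GG k (Ri x) (Ri y)))"
  have RinjD: "X = Y" if "X \<in> D" "Y \<in> D" "R X = R Y" for X Y using Rinj that unfolding inj_on_def by blast
  have Rieq: "x = y" if "Ri x = Ri y" for x y using Ri2 that by metis
  have lpp: "is_LPP g"
    unfolding is_LPP_def
  proof (intro conjI allI)
    fix y0
    have "inj (\<lambda>x. g x y0)"
    proof (rule injI)
      fix x1 x2 assume "g x1 y0 = g x2 y0"
      then have "GG k (Ri x1) (Ri y0) = GG k (Ri x2) (Ri y0)" unfolding g_def using RinjD GGD by blast
      moreover obtain e1 p1 where 1: "Ri x1 = (e1,p1)" by force
      moreover obtain e2 p2 where 2: "Ri x2 = (e2,p2)" by force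
      moreover have "p1 < 2*k" "p2 < 2*k" using Ri1[of x1] Ri1[of x2] 1 2 unfolding D_def by auto
      ultimately have "Ri x1 = Ri x2" using latin_x[OF k4 kp] by auto
      then show "x1 = x2" by (rule Rieq)
    qed
    then show "bij (\<lambda>x. g x y0)" by (simp add: bij_def finite_UNIV_inj_surj)
  next
    fix x0
    have "inj (\<lambda>y. g x0 y)"
    proof (rule injI)
      fix y1 y2 assume "g x0 y1 = g x0 y2"
      then have "GG k (Ri x0) (Ri y1) = GG k (Ri x0) (Ri y2)" unfolding g_def using RinjD GGD by blast
      moreover obtain e1 p1 where 1: "Ri y1 = (e1,p1)" by force
      moreover obtain e2 p2 where 2: "Ri y2 = (e2,p2)" by force
      moreover have "p1 < 2*k" "p2 < 2*k" using Ri1[of y1] Ri1[of y2] 1 2 unfolding D_def by auto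
      ultimately have "Ri y1 = Ri y2" using latin_y by auto
      then show "y1 = y2" by (rule Rieq)
    qed
    then show "bij (\<lambda>y. g x0 y)" by (simp add: bij_def finite_UNIV_inj_surj)
  qed
  have ppt: "is_ppt q \<beta>" and fb: "\<forall>i<q. \<forall>x. f x (\<beta> i x) = c i" using tb unfolding tuple_of_def by auto
  have trans: "\<exists>m<q. \<beta> m x = y" for x y
  proof -
    have "inj_on (\<lambda>m. \<beta> m x) {..<q}"
    proof (rule inj_onI)
      fix m m' assume mm: "m \<in> {..<q}" "m' \<in> {..<q}" "\<beta> m x = \<beta> m' x"
      show "m = m'"
      proof (rule ccontr)
        assume "m \<noteq> m'"
        then have "inv (\<beta> m) (\<beta> m' x) \<noteq> x" using ppt mm unfolding is_ppt_def by auto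
        moreover have "bij (\<beta> m)" using ppt mm unfolding is_ppt_def by auto
        then have "inv (\<beta> m) (\<beta> m x) = x" by (simp add: bij_is_inj)
        ultimately show False using mm(3) by simp
      qed
    qed
    then have "card ((\<lambda>m. \<beta> m x) ` {..<q}) = card (UNIV :: 'a set)" using card_image assms(4) by fastforce
    then have "(\<lambda>m. \<beta> m x) ` {..<q} = UNIV" by (simp add: card_subset_eq)
    then show ?thesis by (metis UNIV_I imageE lessThan_iff)
  qed
  have orth: "orthogonal f g"
    unfolding orthogonal_def
  proof (intro allI)
    fix u v
    obtain n where n: "n < q" "c n = u" using assms(5) unfolding bij_betw_def by (metis UNIV_I imageE lessThan_iff)
    have "\<beta> n \<in> G1 k c" using bb n(1) unfolding bij_betw_def by auto
    then obtain i j where act: "\<forall>e p. p < 2*k \<longrightarrow> \<beta> n (rho k c e p) = (case SS k i j (e,p) of (e',p') \<Rightarrow> rho k c e' p')"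
      using G1_act[OF k4 kp cinj] by blast
    have actR: "\<beta> n (R X) = R (SS k i j X)" if "X \<in> D" for X
    proof -
      obtain e p where X: "X = (e,p)" by force
      then have "p < 2*k" using that unfolding D_def by auto
      then show ?thesis using act X unfolding R_def by (auto split: prod.splits)
    qed
    define h where "h = (\<lambda>x. g x (\<beta> n x))"
    have hR: "h x = R (GG k (Ri x) (SS k i j (Ri x)))" for x
    proof -
      have "\<beta> n x = R (SS k i j (Ri x))" using actR[OF Ri1[of x]] Ri2[of x] by simp
      then have "Ri (\<beta> n x) = SS k i j (Ri x)" using Ri3[OF SSD] by simp
      then show ?thesis unfolding h_def g_def by simp
    qed
    have hinj: "inj h"
    proof (rule injI)
      fix x1 x2 assume "h x1 = h x2"
      then have "GG k (Ri x1) (SS k i j (Ri x1)) = GG k (Ri x2) (SS k i j (Ri x2))"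
        unfolding hR using RinjD GGD by blast
      moreover obtain e1 p1 where 1: "Ri x1 = (e1,p1)" by force
      moreover obtain e2 p2 where 2: "Ri x2 = (e2,p2)" by force
      moreover have "p1 < 2*k" "p2 < 2*k" using Ri1[of x1] Ri1[of x2] 1 2 unfolding D_def by auto
      ultimately have "Ri x1 = Ri x2" using orth_coord[OF k4 kp] by auto
      then show "x1 = x2" by (rule Rieq)
    qed
    then have "surj h" by (simp add: finite_UNIV_inj_surj)
    then obtain x where x: "h x = v" by (metis surjD)
    show "\<exists>!(x, y). f x y = u \<and> g x y = v"
    proof (rule ex1I[of _ "(x, \<beta> n x)"])
      show "case (x, \<beta> n x) of (x, y) \<Rightarrow> f x y = u \<and> g x y = v"
        using fb n x unfolding h_def by simp
    next
      fix z assume z: "case z of (x, y) \<Rightarrow> f x y = u \<and> g x y = v"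
      obtain x' y' where z': "z = (x', y')" by force
      obtain m where m: "m < q" "\<beta> m x' = y'" using trans by blast
      have "c m = u" using z z' fb m by auto
      then have "m = n" using n assms(5) m(1) unfolding bij_betw_def inj_on_def by auto
      then have "h x' = v" using z z' m unfolding h_def by auto
      then have "x' = x" using hinj x unfolding inj_def by auto
      then show "z = (x, \<beta> n x)" using z' m \<open>m = n\<close> by simp
    qed
  qed
  show ?thesis unfolding has_companion_def using lpp orth by blast
qed

end
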